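(* Let $\sigma$ be a proper schedule and $\sigma'$ the intermediate schedule obtained from $\sigma$ by an admissible swap at step $j^*\in J$ between machines $M_h$ and $M_i$. Then $C_j(\sigma')\le C_{j^*}(\sigma)$ for all $j\in J_H\cup J_I$.
   Context: Jobs $J=\{1,\dots,n\}$, job $j$ with positive integer processing time $p_j$, are scheduled non-preemptively on $m$ identical machines $M_1,\dots,M_m$; $p_{\max}=\max_j p_j$, $P(X)=\sum_{j\in X}p_j$. A proper schedule $\sigma$ is a partition $J=J_1(\sigma)\cup\dots\cup J_m(\sigma)$, the jobs of $J_i(\sigma)$ processed on $M_i$ consecutively from time $0$ without idle time in increasing index order; $C_j(\sigma)$ is the completion time of $j$. $J_j=\{1,\dots,j\}$, $J_{i,j}(\sigma)=J_i(\sigma)\cap J_j$, $\Delta_{h,i,j}(\sigma)=P(J_{h,j}(\sigma))-P(J_{i,j}(\sigma))$. The swap: admissible for proper $\sigma$ at step $j^*$ with machines $M_h,M_i$ if $j^*\in J_h(\sigma)$, $|J_i(\sigma)\setminus J_{i,j^*}(\sigma)|\ge 2p_{\max}$, and $\Delta_{h,i,j^*}(\sigma)\ge 4p_{\max}^2$. Let $J_I$ be the first (smallest-index) $2p_{\max}$ jobs of $J_i(\sigma)\setminus J_{i,j^*}(\sigma)$ and $J_H$ the last (largest-index) $2p_{\max}$ jobs of $J_{h,j^*}(\sigma)$; choose non-empty $J_{H'}\subseteq J_H$, $J_{I'}\subseteq J_I$ with $P(J_{H'})=P(J_{I'})$. The intermediate schedule $\sigma'$: on $M_h$ the time interval occupied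 by $J_H$ in $\sigma$ is filled by $J_H\setminus J_{H'}$ then $J_{I'}$; on $M_i$ the interval occupied by $J_I$ is filled by $J_{H'}$ then $J_I\setminus J_{I'}$ (each group in its order in $\sigma$); all other jobs keep their positions. *)

theory Defs
  imports Main
begin

(* Jobs are 1..n, machines are 1..m, processing times p :: nat => nat.
   A proper schedule is given by its machine sets Js i = J_i(sigma). *)

definition P :: "(nat \<Rightarrow> nat) \<Rightarrow> nat set \<Rightarrow> nat" where
  "P p X = (\<Sum>j\<in>X. p j)"

definition pmax :: "nat \<Rightarrow> (nat \<Rightarrow> nat) \<Rightarrow> nat" where
  "pmax n p = Max (p ` {1..n})"

definition proper :: "nat \<Rightarrow> nat \<Rightarrow> (nat \<Rightarrow> nat set) \<Rightarrow> bool" where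
  "proper n m Js \<longleftrightarrow>
     (\<forall>i\<in>{1..m}. Js i \<subseteq> {1..n}) \<and> (\<Union>i\<in>{1..m}. Js i) = {1..n} \<and>
     (\<forall>i\<in>{1..m}. \<forall>k\<in>{1..m}. i \<noteq> k \<longrightarrow> Js i \<inter> Js k = {})"

definition seq :: "(nat \<Rightarrow> nat set) \<Rightarrow> nat \<Rightarrow> nat list" where
  "seq Js i = sorted_list_of_set (Js i)"

definition ctime_list :: "(nat \<Rightarrow> nat) \<Rightarrow> nat list \<Rightarrow> nat \<Rightarrow> nat" where
  "ctime_list p xs j = sum_list (map p (takeWhile (\<lambda>k. k \<noteq> j) xs)) + p j"

definition ctime :: "(nat \<Rightarrow> nat) \<Rightarrow> nat \<Rightarrow> (nat \<Rightarrow> nat list) \<Rightarrow> nat \<Rightarrow> nat" where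
  "ctime p m S j = ctime_list p (S (THE i. i \<in> {1..m} \<and> j \<in> set (S i))) j"

definition Jij :: "(nat \<Rightarrow> nat set) \<Rightarrow> nat \<Rightarrow> nat \<Rightarrow> nat set" where
  "Jij Js i j = Js i \<inter> {1..j}"

definition Delta :: "(nat \<Rightarrow> nat) \<Rightarrow> (nat \<Rightarrow> nat set) \<Rightarrow> nat \<Rightarrow> nat \<Rightarrow> nat \<Rightarrow> int" where
  "Delta p Js h i j = int (P p (Jij Js h j)) - int (P p (Jij Js i j))"

definition admissible_swap ::
  "nat \<Rightarrow> nat \<Rightarrow> (nat \<Rightarrow> nat) \<Rightarrow> (nat \<Rightarrow> nat set) \<Rightarrow> nat \<Rightarrow> nat \<Rightarrow> nat \<Rightarrow> bool" where
  "admissible_swap n m p Js jst h i \<longleftrightarrow>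
     proper n m Js \<and> h \<in> {1..m} \<and> i \<in> {1..m} \<and> jst \<in> Js h \<and>
     card (Js i - Jij Js i jst) \<ge> 2 * pmax n p \<and>
     Delta p Js h i jst \<ge> 4 * int (pmax n p) ^ 2"

definition JI_list :: "nat \<Rightarrow> (nat \<Rightarrow> nat) \<Rightarrow> (nat \<Rightarrow> nat set) \<Rightarrow> nat \<Rightarrow> nat \<Rightarrow> nat list" where
  "JI_list n p Js jst i = take (2 * pmax n p) (sorted_list_of_set (Js i - Jij Js i jst))"

definition JH_list :: "nat \<Rightarrow> (nat \<Rightarrow> nat) \<Rightarrow> (nat \<Rightarrow> nat set) \<Rightarrow> nat \<Rightarrow> nat \<Rightarrow> nat list" where
  "JH_list n p Js jst h =
     drop (card (Jij Js h jst) - 2 * pmax n p) (sorted_list_of_set (Jij Js h jst))"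

(* In sigma, machine h runs
     (jobs of J_{h,jst} before J_H) @ J_H @ (jobs of J_h after jst)
   and machine i runs
     J_{i,jst} @ J_I @ (remaining jobs of J_i after J_I).
   The block J_H is replaced by (J_H \ J_H') @ J_I', the block J_I by J_H' @ (J_I \ J_I');
   all other jobs keep their positions (both blocks have unchanged total length). *)
definition intermediate ::
  "nat \<Rightarrow> (nat \<Rightarrow> nat) \<Rightarrow> (nat \<Rightarrow> nat set) \<Rightarrow> nat \<Rightarrow> nat \<Rightarrow> nat \<Rightarrow> nat set \<Rightarrow> nat set
     \<Rightarrow> (nat \<Rightarrow> nat list)" where
  "intermediate n p Js jst h i H' I' =
     (let JH = JH_list n p Js jst h; JI = JI_list n p Js jst i;
          Ah = take (card (Jij Js h jst) - 2 * pmax n p) (sorted_list_of_set (Jij Js h jst));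
          Bh = sorted_list_of_set (Js h - Jij Js h jst);
          Ai = sorted_list_of_set (Jij Js i jst);
          Bi = drop (2 * pmax n p) (sorted_list_of_set (Js i - Jij Js i jst))
      in (seq Js)(h := Ah @ filter (\<lambda>k. k \<notin> H') JH @ filter (\<lambda>k. k \<in> I') JI @ Bh,
                  i := Ai @ filter (\<lambda>k. k \<in> H') JH @ filter (\<lambda>k. k \<notin> I') JI @ Bi))"

end

theory Submission
  imports Defs
begin

lemma ctime_list_app: "j \<notin> set xs \<Longrightarrow> ctime_list p (xs @ ys) j = sum_list (map p xs) + ctime_list p ys j"
  by (induction xs) (auto simp: ctime_list_def)

lemma ctime_list_le: "j \<in> set ys \<Longrightarrow> ctime_list p (ys @ zs) j \<le> sum_list (map p ys)"
  by (induction ys) (auto simp: ctime_list_def)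

lemma ctime_list_block: "j \<notin> set xs \<Longrightarrow> j \<in> set ys \<Longrightarrow> ctime_list p (xs @ ys @ zs) j \<le> sum_list (map p xs) + sum_list (map p ys)"
  using ctime_list_app[of j xs p "ys @ zs"] ctime_list_le[of j ys p zs] by simp

lemma ctime_list_sorted: "sorted_wrt (<) xs \<Longrightarrow> j \<in> set xs \<Longrightarrow> ctime_list p xs j = sum p {k\<in>set xs. k \<le> j}"
proof (induction xs)
  case Nil then show ?case by simp
next
  case (Cons x xs)
  show ?case
  proof (cases "x = j")
    case True
    then have "{k\<in>set (x#xs). k \<le> j} = {j}" using Cons.prems by auto
    then show ?thesis using True by (simp add: ctime_list_def)
  next
    case False
    then have j: "j \<in> set xs" "x < j" using Cons.prems by auto
    have "{k\<in>set (x#xs). k \<le> j} = insert x {k\<in>set xs. k \<le> j}" using j by auto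
    moreover have "x \<notin> set xs" using Cons.prems by auto
    ultimately show ?thesis using Cons j False by (simp add: ctime_list_def)
  qed
qed

lemma ctime_eq: "k0 \<in> {1..m} \<Longrightarrow> j \<in> set (S k0) \<Longrightarrow> (\<forall>k\<in>{1..m}. j \<in> set (S k) \<longrightarrow> k = k0)
  \<Longrightarrow> ctime p m S j = ctime_list p (S k0) j"
proof -
  assume a: "k0 \<in> {1..m}" "j \<in> set (S k0)" "\<forall>k\<in>{1..m}. j \<in> set (S k) \<longrightarrow> k = k0"
  have "(THE i. i \<in> {1..m} \<and> j \<in> set (S i)) = k0"
  proof (rule the_equality)
    show "k0 \<in> {1..m} \<and> j \<in> set (S k0)" using a(1,2) by blast
    fix x assume "x \<in> {1..m} \<and> j \<in> set (S x)"
    then show "x = k0" using a(3) by blast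
  qed
  then show ?thesis by (simp add: ctime_def)
qed

theorem lemma6:
  fixes n m :: nat and p :: "nat \<Rightarrow> nat" and Js :: "nat \<Rightarrow> nat set"
    and jst h i :: nat and H' I' :: "nat set"
  assumes pos: "\<forall>j\<in>{1..n}. p j > 0"
    and adm: "admissible_swap n m p Js jst h i"
    and H'sub: "H' \<subseteq> set (JH_list n p Js jst h)" and H'ne: "H' \<noteq> {}"
    and I'sub: "I' \<subseteq> set (JI_list n p Js jst i)" and I'ne: "I' \<noteq> {}"
    and eqP: "P p H' = P p I'"
  shows "\<forall>j \<in> set (JH_list n p Js jst h) \<union> set (JI_list n p Js jst i).
           ctime p m (intermediate n p Js jst h i H' I') j \<le> ctime p m (seq Js) jst"
proof -
  have pr: "proper n m Js" and hm: "h \<in> {1..m}" and im: "i \<in> {1..m}" and jh: "jst \<in> Js h"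
    and Dl: "Delta p Js h i jst \<ge> 4 * int (pmax n p) ^ 2"
    using adm by (auto simp: admissible_swap_def)
  have sub: "\<And>k. k \<in> {1..m} \<Longrightarrow> Js k \<subseteq> {1..n}" using pr by (auto simp: proper_def)
  have disj: "\<And>k k'. k \<in> {1..m} \<Longrightarrow> k' \<in> {1..m} \<Longrightarrow> k \<noteq> k' \<Longrightarrow> Js k \<inter> Js k' = {}"
    using pr by (auto simp: proper_def)
  have fin: "\<And>k. k \<in> {1..m} \<Longrightarrow> finite (Js k)" using sub finite_subset by blast
  have pm: "\<And>j. j \<in> {1..n} \<Longrightarrow> p j \<le> pmax n p" unfolding pmax_def by auto
  have jn: "jst \<in> {1..n}" using sub[OF hm] jh by auto
  have hi: "h \<noteq> i"
  proof
    assume "h = i"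
    then have "Delta p Js h i jst = 0" by (simp add: Delta_def)
    then have "pmax n p = 0" using Dl by simp
    moreover have "p jst > 0" using pos jn by blast
    ultimately show False using pm[OF jn] by simp
  qed
  define c where "c = 2 * pmax n p"
  define L where "L = sorted_list_of_set (Jij Js h jst)"
  define K where "K = card (Jij Js h jst) - c"
  define R where "R = sorted_list_of_set (Js i - Jij Js i jst)"
  define Ah where "Ah = take K L"
  define JH where "JH = drop K L"
  define JI where "JI = take c R"
  define Bi where "Bi = drop c R"
  define Ai where "Ai = sorted_list_of_set (Jij Js i jst)"
  define Bh where "Bh = sorted_list_of_set (Js h - Jij Js h jst)"
  define T where "T = P p (Jij Js h jst)"
  have JHe: "JH_list n p Js jst h = JH" by (simp add: JH_list_def JH_def K_def L_def c_def)
  have JIe: "JI_list n p Js jst i = JI" by (simp add: JI_list_def JI_def R_def c_def)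
  define S' where "S' = (seq Js)(h := Ah @ filter (\<lambda>k. k \<notin> H') JH @ filter (\<lambda>k. k \<in> I') JI @ Bh,
                  i := Ai @ filter (\<lambda>k. k \<in> H') JH @ filter (\<lambda>k. k \<notin> I') JI @ Bi)"
  have Se: "intermediate n p Js jst h i H' I' = S'"
    by (simp add: intermediate_def Let_def S'_def JHe JIe Ah_def K_def L_def c_def Bh_def Ai_def Bi_def R_def)
  have finh: "finite (Jij Js h jst)" using fin[OF hm] by (simp add: Jij_def)
  have fini: "finite (Jij Js i jst)" using fin[OF im] by (simp add: Jij_def)
  have finR: "finite (Js i - Jij Js i jst)" using fin[OF im] by simp
  have setL: "set L = Jij Js h jst" "distinct L" using finh by (auto simp: L_def)
  have setR: "set R = Js i - Jij Js i jst" "distinct R" using finR by (auto simp: R_def)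
  have dAh: "distinct Ah" "distinct JH" "set Ah \<inter> set JH = {}"
    using setL(2) unfolding Ah_def JH_def
    by (metis distinct_take, metis distinct_drop, metis append_take_drop_id distinct_append)
  have setAJ: "set Ah \<union> set JH = Jij Js h jst"
    using setL(1) unfolding Ah_def JH_def by (metis append_take_drop_id set_append)
  have dJI: "distinct JI" using setR(2) by (simp add: JI_def)
  have setJI: "set JI \<subseteq> Js i - Jij Js i jst" using setR(1) by (auto simp: JI_def dest: in_set_takeD)
  have dJB: "set JI \<inter> set Bi = {}" using setR(2) unfolding JI_def Bi_def
    by (metis append_take_drop_id distinct_append)
  have setBi: "set Bi \<subseteq> Js i - Jij Js i jst" using setR(1) by (auto simp: Bi_def dest: in_set_dropD)
  have setAi: "set Ai = Jij Js i jst" "distinct Ai" using fini by (auto simp: Ai_def)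
  have setBh: "set Bh \<subseteq> Js h" using fin[OF hm] by (auto simp: Bh_def)
  have dBh: "set Bh \<inter> set JH = {}" using fin[OF hm] setAJ by (auto simp: Bh_def)
  have lenJI: "card (set JI) \<le> c" using distinct_card[OF dJI] by (simp add: JI_def)
  have JHh: "set JH \<subseteq> Js h" using setAJ by (auto simp: Jij_def)
  have JIi: "set JI \<subseteq> Js i" using setJI by auto
  have Ahh: "set Ah \<subseteq> Js h" using setAJ by (auto simp: Jij_def)
  have H'JH: "H' \<subseteq> set JH" using H'sub JHe by simp
  have I'JI: "I' \<subseteq> set JI" using I'sub JIe by simp
  have dhi: "Js h \<inter> Js i = {}" using disj hm im hi by blast
  have target: "ctime p m (seq Js) jst = T"
  proof -
    have fs: "finite (Js h)" using fin[OF hm] .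
    have "ctime p m (seq Js) jst = ctime_list p (seq Js h) jst"
    proof (rule ctime_eq[OF hm])
      show "jst \<in> set (seq Js h)" using fs jh by (simp add: seq_def)
      show "\<forall>k\<in>{1..m}. jst \<in> set (seq Js k) \<longrightarrow> k = h"
      proof (intro ballI impI)
        fix k assume k: "k \<in> {1..m}" "jst \<in> set (seq Js k)"
        then have "jst \<in> Js k" using fin[OF k(1)] by (simp add: seq_def)
        then show "k = h" using disj[OF k(1) hm] jh by blast
      qed
    qed
    also have "\<dots> = sum p {k \<in> Js h. k \<le> jst}"
      using ctime_list_sorted[of "seq Js h" jst p] fs jh by (simp add: seq_def)
    also have "{k \<in> Js h. k \<le> jst} = Jij Js h jst" using sub[OF hm] by (auto simp: Jij_def)
    finally show ?thesis by (simp add: T_def P_def)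
  qed
  have sAJ: "sum p (set Ah) + sum p (set JH) = T"
    using setAJ dAh finh by (simp add: T_def P_def sum.union_disjoint[symmetric])
  have sH: "sum_list (map p (filter (\<lambda>k. k \<notin> H') JH)) = sum p (set JH) - sum p H'"
  proof -
    have "sum_list (map p (filter (\<lambda>k. k \<notin> H') JH)) = sum p (set JH - H')"
      using dAh(2) by (simp add: sum_list_distinct_conv_sum_set set_diff_eq)
    also have "\<dots> = sum p (set JH) - sum p H'" using H'JH finite_subset[OF H'JH] by (simp add: sum_diff_nat)
    finally show ?thesis .
  qed
  have sH2: "sum_list (map p (filter (\<lambda>k. k \<in> H') JH)) = sum p H'"
  proof -
    have "set (filter (\<lambda>k. k \<in> H') JH) = H'" using H'JH by auto
    then show ?thesis using dAh(2) by (metis distinct_filter sum_list_distinct_conv_sum_set)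
  qed
  have sI: "sum_list (map p (filter (\<lambda>k. k \<in> I') JI)) = sum p I'"
  proof -
    have "set (filter (\<lambda>k. k \<in> I') JI) = I'" using I'JI by auto
    then show ?thesis using dJI by (metis distinct_filter sum_list_distinct_conv_sum_set)
  qed
  have sI2: "sum_list (map p (filter (\<lambda>k. k \<notin> I') JI)) \<le> sum p (set JI)"
  proof -
    have "sum_list (map p (filter (\<lambda>k. k \<notin> I') JI)) = sum p (set JI - I')"
      using dJI by (simp add: sum_list_distinct_conv_sum_set set_diff_eq)
    also have "\<dots> \<le> sum p (set JI)" by (rule sum_mono2) auto
    finally show ?thesis .
  qed
  have sHle: "sum p H' \<le> sum p (set JH)" by (rule sum_mono2) (use H'JH in auto)
  have sJI: "sum p (set JI) \<le> c * pmax n p"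
  proof -
    have "sum p (set JI) \<le> card (set JI) * pmax n p"
      using sum_bounded_above[of "set JI" p "pmax n p"] pm sub[OF im] JIi by force
    also have "\<dots> \<le> c * pmax n p" using lenJI by simp
    finally show ?thesis .
  qed
  have Dl2: "int (P p (Jij Js i jst)) + 4 * int (pmax n p) ^ 2 \<le> int T"
    using Dl by (simp add: Delta_def T_def)
  have iT: "sum p (set Ai) + sum p H' + sum p (set JI) \<le> T"
  proof -
    have "sum p H' \<le> pmax n p * pmax n p * 2"
      using eqP I'JI sum_mono2[of "set JI" I' p] sJI by (simp add: P_def c_def)
    then have a: "sum p H' + sum p (set JI) \<le> 4 * pmax n p ^ 2"
      using sJI by (simp add: c_def power2_eq_square)
    have "int (P p (Jij Js i jst) + 4 * pmax n p ^ 2) \<le> int T" using Dl2 by simp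
    then have b: "P p (Jij Js i jst) + 4 * pmax n p ^ 2 \<le> T" by (simp only: of_nat_le_iff)
    show ?thesis using a b setAi by (simp add: P_def)
  qed
  have sAi: "sum_list (map p Ai) = sum p (set Ai)" using setAi(2) by (simp add: sum_list_distinct_conv_sum_set)
  have sAh: "sum_list (map p Ah) = sum p (set Ah)" using dAh(1) by (simp add: sum_list_distinct_conv_sum_set)
  have hT: "sum_list (map p Ah) + (sum_list (map p (filter (\<lambda>k. k \<notin> H') JH)) + sum_list (map p (filter (\<lambda>k. k \<in> I') JI))) \<le> T"
    using sAh sH sI sAJ sHle eqP by (simp add: P_def)
  have iT2: "sum_list (map p Ai) + (sum_list (map p (filter (\<lambda>k. k \<in> H') JH)) + sum_list (map p (filter (\<lambda>k. k \<notin> I') JI))) \<le> T"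
    using sAi sH2 sI2 iT by simp
  have other: "\<And>k j. k \<in> {1..m} \<Longrightarrow> k \<noteq> h \<Longrightarrow> k \<noteq> i \<Longrightarrow> j \<in> Js h \<union> Js i \<Longrightarrow> j \<notin> set (S' k)"
  proof -
    fix k j assume k: "k \<in> {1..m}" "k \<noteq> h" "k \<noteq> i" "j \<in> Js h \<union> Js i"
    then have "j \<notin> Js k" using disj[OF k(1) hm] disj[OF k(1) im] by blast
    then show "j \<notin> set (S' k)" using k fin[OF k(1)] by (simp add: S'_def seq_def)
  qed
  have Sh: "S' h = Ah @ filter (\<lambda>k. k \<notin> H') JH @ filter (\<lambda>k. k \<in> I') JI @ Bh" using hi by (simp add: S'_def)
  have Si: "S' i = Ai @ filter (\<lambda>k. k \<in> H') JH @ filter (\<lambda>k. k \<notin> I') JI @ Bi" by (simp add: S'_def)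
  show ?thesis
    unfolding Se JHe JIe target
  proof
    fix j assume j: "j \<in> set JH \<union> set JI"
    show "ctime p m S' j \<le> T"
    proof (cases "(j \<in> set JH \<and> j \<notin> H') \<or> (j \<in> set JI \<and> j \<in> I')")
      case True
      have jh: "j \<in> set (filter (\<lambda>k. k \<notin> H') JH @ filter (\<lambda>k. k \<in> I') JI)" using True by auto
      have jA: "j \<notin> set Ah" using True dAh(3) Ahh JIi dhi by blast
      have jnot: "j \<notin> set (S' i)" unfolding Si using True setAi(1) setJI JHh JIi setBi dhi dJB
        by (auto simp: Jij_def)
      have "ctime p m S' j = ctime_list p (S' h) j"
      proof (rule ctime_eq[OF hm])
        show "j \<in> set (S' h)" using jh Sh by auto
        have jhi: "j \<in> Js h \<union> Js i" using j JHh JIi by blast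
        show "\<forall>k\<in>{1..m}. j \<in> set (S' k) \<longrightarrow> k = h"
        proof (intro ballI impI)
          fix k assume k: "k \<in> {1..m}" "j \<in> set (S' k)"
          show "k = h"
          proof (rule ccontr)
            assume kh: "k \<noteq> h"
            show False
            proof (cases "k = i")
              case True then show False using k jnot by simp
            next
              case False then show False using other[OF k(1) _ _ jhi] k kh by auto
            qed
          qed
        qed
      qed
      also have "\<dots> \<le> T" unfolding Sh using ctime_list_block[OF jA jh, of p Bh] hT by simp
      finally show ?thesis .
    next
      case False
      have jh: "j \<in> set (filter (\<lambda>k. k \<in> H') JH @ filter (\<lambda>k. k \<notin> I') JI)" using False j by auto
      have jA: "j \<notin> set Ai" using False j setAi(1) setJI JHh dhi by (auto simp: Jij_def)
      have jnot: "j \<notin> set (S' h)" unfolding Sh using False j dAh(3) Ahh JHh JIi setBh dhi dBh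
        by auto
      have "ctime p m S' j = ctime_list p (S' i) j"
      proof (rule ctime_eq[OF im])
        show "j \<in> set (S' i)" using jh Si by auto
        have jhi: "j \<in> Js h \<union> Js i" using j JHh JIi by blast
        show "\<forall>k\<in>{1..m}. j \<in> set (S' k) \<longrightarrow> k = i"
        proof (intro ballI impI)
          fix k assume k: "k \<in> {1..m}" "j \<in> set (S' k)"
          show "k = i"
          proof (rule ccontr)
            assume kh: "k \<noteq> i"
            show False
            proof (cases "k = h")
              case True then show False using k jnot by simp
            next
              case False then show False using other[OF k(1) _ _ jhi] k kh by auto
            qed
          qed
        qed
      qed
      also have "\<dots> \<le> T" unfolding Si using ctime_list_block[OF jA jh, of p Bi] iT2 by simp
      finally show ?thesis .
    qed
  qed
qed

end
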